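(* For integers $b\ge 0$ let $I_b=\{1,3,5,\ldots,2b+1\}$ (so $I_0=\{1\}$ and $s(I_b)=b$). Then the numbers $C_a(I_b)$, $0\le a\le b$, satisfy: (1) $C_0(\{1\})=1$; (2) for all integers $b\ge a\ge 1$, $$C_a(I_b)=(2a-1)!!\sum_{i=a-1}^{b-1}\left(C_i(I_{b-1})\cdot\frac{(2b+1)!!}{(2i+3)!!}\right);$$ (3) for all integers $b\ge 1$, $C_0(I_b)=C_1(I_b)$.
   Context: Partitions are drawn as Young diagrams $\mathbb{D}(\lambda)$ in English notation; $c_{i,j}$ is the cell in row $i$, column $j$. The hook length $h_\lambda(c)$ is the number of cells of $\mathbb{D}(\lambda)$ weakly right of $c$ in its row or weakly below $c$ in its column (counting $c$ once). For $\mu\subseteq\lambda$, an excited diagram of $\lambda/\mu$ is a subset of $\mathbb{D}(\lambda)$ obtained from $\mathbb{D}(\mu)$ by repeatedly replacing a cell $c_{i,j}\in D$ by $c_{i+1,j+1}$, allowed iff $c_{i+1,j+1}\in\mathbb{D}(\lambda)$ and none of $c_{i,j+1},c_{i+1,j},c_{i+1,j+1}$ lies in $D$; $\mathbb{E}(\lambda/\mu)$ is their set. A ribbon with $n$ cells is read from its lower-left to its upper-right cell, each successive cell directly right of or directly above the previous; it corresponds to the set of $i\in\{1,\ldots,n-1\}$ with cell $i$ directly below cell $i+1$. A descent set is a non-empty finite set $I$ of positive integers; $\lambda^I$ is the unique partition with $\lambda^I_1=\lambda^I_2$ such that the cells $c_{i,j}\in\mathbb{D}(\lambda^I)$ with fewer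 than three of $c_{i,j+1},c_{i+1,j},c_{i+1,j+1}$ in $\mathbb{D}(\lambda^I)$ form a ribbon corresponding to $I$; this ribbon is $\mathbb{D}(\lambda^I)\setminus\mathbb{D}(\mu^I)$ for a partition $\mu^I$. Let $s(I)=\lambda^I_1-1$. Naruse-Newton coefficients: every excited diagram of $\lambda^I/\mu^I$ meets row 1 in $\{c_{1,1},\ldots,c_{1,r}\}$, $0\le r\le s$; for $0\le j\le s(I)$, $C_j(I)=\sum_D\prod_{c\in D,\,c\notin\text{row }1}h_{\lambda^I}(c)$, summed over $D\in\mathbb{E}(\lambda^I/\mu^I)$ with exactly $s-j$ cells in row 1. For a positive integer $x$, $x!!=\prod_{i=0}^{\lceil x/2\rceil-1}(x-2i)$. *)

theory Defs
  imports Complex_Main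
begin

type_synonym cell = "nat \<times> nat"   (* (row, column), 1-indexed, English notation *)

definition is_partition :: "nat list \<Rightarrow> bool" where
  "is_partition lam \<longleftrightarrow> sorted (rev lam) \<and> (\<forall>x\<in>set lam. 0 < x)"

definition diagram :: "nat list \<Rightarrow> cell set" where
  "diagram lam = {(i, j). 1 \<le> i \<and> i \<le> length lam \<and> 1 \<le> j \<and> j \<le> lam ! (i - 1)}"

definition hook :: "nat list \<Rightarrow> cell \<Rightarrow> nat" where
  "hook lam c = card {d \<in> diagram lam.
      (fst d = fst c \<and> snd d \<ge> snd c) \<or> (snd d = snd c \<and> fst d \<ge> fst c)}"

inductive_set excited :: "nat list \<Rightarrow> nat list \<Rightarrow> cell set set" for lam mu where
  base: "diagram mu \<in> excited lam mu"
| step: "\<lbrakk>D \<in> excited lam mu; (i, j) \<in> D; (i + 1, j + 1) \<in> diagram lam;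
          (i, j + 1) \<notin> D; (i + 1, j) \<notin> D; (i + 1, j + 1) \<notin> D\<rbrakk>
         \<Longrightarrow> (D - {(i, j)}) \<union> {(i + 1, j + 1)} \<in> excited lam mu"

definition directly_below :: "cell \<Rightarrow> cell \<Rightarrow> bool" where
  "directly_below a b \<longleftrightarrow> fst a = fst b + 1 \<and> snd a = snd b"

definition directly_right :: "cell \<Rightarrow> cell \<Rightarrow> bool" where
  "directly_right b a \<longleftrightarrow> fst b = fst a \<and> snd b = snd a + 1"

(* R is a ribbon (read lower-left to upper-right as p 1, ..., p n) corresponding to I *)
definition ribbon_corresponds :: "cell set \<Rightarrow> nat set \<Rightarrow> bool" where
  "ribbon_corresponds R I \<longleftrightarrow> (\<exists>n p. 1 \<le> n \<and> inj_on p {1..n} \<and> R = p ` {1..n} \<and>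
      (\<forall>k\<in>{1..<n}. directly_right (p (k + 1)) (p k) \<or> directly_below (p k) (p (k + 1))) \<and>
      I = {k \<in> {1..<n}. directly_below (p k) (p (k + 1))})"

definition rim :: "nat list \<Rightarrow> cell set" where
  "rim lam = {c \<in> diagram lam.
      card ({(fst c, snd c + 1), (fst c + 1, snd c), (fst c + 1, snd c + 1)} \<inter> diagram lam) < 3}"

definition lamI :: "nat set \<Rightarrow> nat list" where
  "lamI I = (THE lam. is_partition lam \<and> 2 \<le> length lam \<and> lam ! 0 = lam ! 1 \<and>
                      ribbon_corresponds (rim lam) I)"

definition muI :: "nat set \<Rightarrow> nat list" where
  "muI I = (THE mu. is_partition mu \<and> diagram mu \<subseteq> diagram (lamI I) \<and>
                    diagram (lamI I) - diagram mu = rim (lamI I))"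

definition sI :: "nat set \<Rightarrow> nat" where
  "sI I = lamI I ! 0 - 1"

definition NNcoeff :: "nat \<Rightarrow> nat set \<Rightarrow> nat" where
  "NNcoeff j I = (\<Sum>D \<in> {D \<in> excited (lamI I) (muI I). card {c \<in> D. fst c = 1} = sI I - j}.
                    \<Prod>c \<in> {c \<in> D. fst c \<noteq> 1}. hook (lamI I) c)"

definition dfact :: "nat \<Rightarrow> nat" where
  "dfact x = (\<Prod>i<(x + 1) div 2. x - 2 * i)"

definition Iodd :: "nat \<Rightarrow> nat set" where
  "Iodd b = (\<lambda>k. 2 * k + 1) ` {0..b}"

end

theory Submission
  imports Defs
begin


definition lamb :: "nat \<Rightarrow> nat list" where
  "lamb b = map (\<lambda>k. if k = 0 then b + 1 else b + 2 - k) [0..<b+2]"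
definition mub :: "nat \<Rightarrow> nat list" where
  "mub b = map (\<lambda>k. b - k) [0..<b]"

definition inlam :: "nat \<Rightarrow> nat \<Rightarrow> nat \<Rightarrow> bool" where
  "inlam b i j \<longleftrightarrow> 1 \<le> i \<and> 1 \<le> j \<and> (if i = 1 then j \<le> b + 1 else i + j \<le> b + 3)"

lemma lamb_len[simp]: "length (lamb b) = b + 2"
  by (simp add: lamb_def del: upt_Suc)
lemma lamb_nth[simp]: "k < b + 2 \<Longrightarrow> lamb b ! k = (if k = 0 then b + 1 else b + 2 - k)"
  by (simp add: lamb_def del: upt_Suc)
lemma mub_len[simp]: "length (mub b) = b"
  by (simp add: mub_def del: upt_Suc)
lemma mub_nth[simp]: "k < b \<Longrightarrow> mub b ! k = b - k"
  by (simp add: mub_def del: upt_Suc)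

lemma diagram_lamb: "diagram (lamb b) = {(i,j). inlam b i j}"
  unfolding diagram_def inlam_def
  by (auto split: if_splits)

lemma diagram_mub: "diagram (mub b) = {(i,j). 1 \<le> i \<and> 1 \<le> j \<and> i + j \<le> b + 1}"
  unfolding diagram_def
  by auto

lemma is_partition_nth:
  assumes "is_partition lam" "i \<le> j" "j < length lam"
  shows "lam ! j \<le> lam ! i"
proof -
  have "sorted (rev lam)" using assms(1) by (simp add: is_partition_def)
  then have "rev lam ! (length lam - 1 - j) \<le> rev lam ! (length lam - 1 - i)"
    using assms by (intro sorted_nth_mono) auto
  then show ?thesis using assms by (simp add: rev_nth)
qed

lemma is_partition_pos:
  assumes "is_partition lam" "j < length lam"
  shows "0 < lam ! j"
  using assms by (auto simp: is_partition_def)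

lemma is_partition_lamb: "is_partition (lamb b)"
proof -
  have "sorted (rev (lamb b))"
    unfolding sorted_iff_nth_mono
    by (auto simp: rev_nth)
  moreover have "\<forall>x\<in>set (lamb b). 0 < x" by (auto simp: in_set_conv_nth)
  ultimately show ?thesis unfolding is_partition_def by auto
qed

lemma is_partition_mub: "is_partition (mub b)"
proof -
  have "sorted (rev (mub b))"
    unfolding sorted_iff_nth_mono
    by (auto simp: rev_nth)
  moreover have "\<forall>x\<in>set (mub b). 0 < x" by (auto simp: in_set_conv_nth)
  ultimately show ?thesis unfolding is_partition_def by auto
qed

lemma diagram_inj:
  assumes "is_partition mu" "is_partition nu" "diagram mu = diagram nu"
  shows "mu = nu"
proof -
  have len: "length mu = length nu"
  proof -
    have "\<And>i. (i,1) \<in> diagram mu \<longleftrightarrow> 1 \<le> i \<and> i \<le> length mu"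
      using is_partition_pos[OF assms(1)] unfolding diagram_def
      by (auto simp: Suc_le_eq)
    moreover have "\<And>i. (i,1) \<in> diagram nu \<longleftrightarrow> 1 \<le> i \<and> i \<le> length nu"
      using is_partition_pos[OF assms(2)] unfolding diagram_def
      by (auto simp: Suc_le_eq)
    ultimately have E: "\<And>i. (1 \<le> i \<and> i \<le> length mu) \<longleftrightarrow> (1 \<le> i \<and> i \<le> length nu)"
      using assms(3) by blast
    show ?thesis
    proof (rule le_antisym)
      show "length mu \<le> length nu"
      proof (rule ccontr)
        assume "\<not> ?thesis" then show False using E[of "length mu"] by auto
      qed
      show "length nu \<le> length mu"
      proof (rule ccontr)
        assume "\<not> ?thesis" then show False using E[of "length nu"] by auto
      qed
    qed
  qed
  show ?thesis
  proof (rule nth_equalityI[OF len])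
    fix k assume k: "k < length mu"
    have A: "\<And>j. 1 \<le> j \<Longrightarrow> (Suc k, j) \<in> diagram mu \<longleftrightarrow> j \<le> mu ! k"
      using k unfolding diagram_def by auto
    have B: "\<And>j. 1 \<le> j \<Longrightarrow> (Suc k, j) \<in> diagram nu \<longleftrightarrow> j \<le> nu ! k"
      using k len unfolding diagram_def by auto
    have p1: "1 \<le> mu ! k" using is_partition_pos[OF assms(1) k] by simp
    have p2: "1 \<le> nu ! k" using is_partition_pos[OF assms(2), of k] k len by simp
    show "mu ! k = nu ! k" using A[of "mu!k"] A[of "nu!k"] B[of "mu!k"] B[of "nu!k"] p1 p2 assms(3)
      by auto
  qed
qed



lemma rim_char:
  assumes "is_partition lam"
  shows "rim lam = {c \<in> diagram lam. (fst c + 1, snd c + 1) \<notin> diagram lam}"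
proof (intro set_eqI iffI)
  fix c assume c: "c \<in> rim lam"
  obtain i j where ij: "c = (i,j)" by fastforce
  have cd: "(i,j) \<in> diagram lam" using c ij by (simp add: rim_def)
  show "c \<in> {c \<in> diagram lam. (fst c + 1, snd c + 1) \<notin> diagram lam}"
  proof (rule ccontr)
    assume "\<not> ?thesis"
    then have d: "(i+1,j+1) \<in> diagram lam" using cd ij by auto
    have "lam ! i \<le> lam ! (i - 1)" using d cd by (intro is_partition_nth[OF assms]) (auto simp: diagram_def)
    then have "(i,j+1) \<in> diagram lam" "(i+1,j) \<in> diagram lam" using d cd by (auto simp: diagram_def)
    then have "{(i, j + 1), (i + 1, j), (i + 1, j + 1)} \<inter> diagram lam = {(i, j + 1), (i + 1, j), (i + 1, j + 1)}"
      using d by auto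
    then have "card ({(i, j + 1), (i + 1, j), (i + 1, j + 1)} \<inter> diagram lam) = 3" by simp
    then show False using c ij by (simp add: rim_def)
  qed
next
  fix c assume c: "c \<in> {c \<in> diagram lam. (fst c + 1, snd c + 1) \<notin> diagram lam}"
  obtain i j where ij: "c = (i,j)" by fastforce
  have "{(i, j + 1), (i + 1, j), (i + 1, j + 1)} \<inter> diagram lam \<subseteq> {(i, j + 1), (i + 1, j)}"
    using c ij by auto
  then have "card ({(i, j + 1), (i + 1, j), (i + 1, j + 1)} \<inter> diagram lam) \<le> card {(i, j + 1), (i + 1, j)}"
    by (intro card_mono) auto
  also have "\<dots> \<le> 2" by (simp add: card_insert_if)
  finally show "c \<in> rim lam" using c ij by (simp add: rim_def)
qed

lemma Iodd_mem: "k \<in> Iodd b \<longleftrightarrow> odd k \<and> k \<le> 2 * b + 1"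
  unfolding Iodd_def by (auto elim!: oddE)

lemma Iodd0: "Iodd 0 = {1}"
  unfolding Iodd_def by auto

definition pb :: "nat \<Rightarrow> nat \<Rightarrow> cell" where
  "pb b k = (b + 2 - k div 2, (k + 1) div 2)"

lemma pb_even: "pb b (2*m) = (b+2-m, m)" by (simp add: pb_def)
lemma pb_odd: "pb b (Suc (2*m)) = (b+2-m, m+1)" by (simp add: pb_def)

lemma nat_parity_cases:
  fixes k :: nat
  obtains m where "k = 2 * m" | m where "k = 2 * m + 1"
  by (metis oddE evenE)

lemma rim_lamb: "rim (lamb b) = {(i,j). inlam b i j \<and> \<not> inlam b (i+1) (j+1)}"
  by (auto simp: rim_char[OF is_partition_lamb] diagram_lamb)

lemma rim_lamb_pb: "rim (lamb b) = pb b ` {1..2*b+2}"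
proof (intro set_eqI iffI)
  fix c assume "c \<in> rim (lamb b)"
  then obtain i j where c: "c = (i,j)" "inlam b i j" "\<not> inlam b (i+1) (j+1)"
    by (auto simp: rim_lamb)
  show "c \<in> pb b ` {1..2*b+2}"
  proof (cases "i = 1")
    case True
    then have "c = pb b (2*b+2)" using c by (auto simp: inlam_def pb_def)
    then show ?thesis by force
  next
    case False
    then have ij: "i \<ge> 2" "j \<ge> 1" "i + j \<le> b + 3" "i + j \<ge> b + 2" using c by (auto simp: inlam_def)
    show ?thesis
    proof (cases "i + j = b + 2")
      case True
      then have "c = pb b (2*j)" using c ij by (auto simp: pb_def)
      moreover have "2 * j \<in> {1..2*b+2}" using ij by auto
      ultimately show ?thesis by blast
    next
      case F: False
      then have "c = pb b (2*j - 1)" using c ij by (auto simp: pb_def)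
      moreover have "2 * j - 1 \<in> {1..2*b+2}" using ij F by auto
      ultimately show ?thesis by blast
    qed
  qed
next
  fix c assume "c \<in> pb b ` {1..2*b+2}"
  then obtain k where k: "c = pb b k" "1 \<le> k" "k \<le> 2*b+2" by auto
  then show "c \<in> rim (lamb b)"
    by (cases k rule: nat_parity_cases) (auto simp: rim_lamb pb_even pb_odd inlam_def)
qed

lemma ribbon_lamb: "ribbon_corresponds (rim (lamb b)) (Iodd b)"
  unfolding ribbon_corresponds_def
proof (intro exI conjI)
  show "1 \<le> 2 * b + 2" by simp
  show "inj_on (pb b) {1..2*b+2}"
  proof (rule inj_onI)
    fix x y assume "x \<in> {1..2*b+2}" "y \<in> {1..2*b+2}" "pb b x = pb b y"
    then show "x = y"
      by (cases x rule: nat_parity_cases; cases y rule: nat_parity_cases) (auto simp: pb_even pb_odd)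
  qed
  show "rim (lamb b) = pb b ` {1..2*b+2}" by (rule rim_lamb_pb)
  show "\<forall>k\<in>{1..<2*b+2}. directly_right (pb b (k + 1)) (pb b k) \<or> directly_below (pb b k) (pb b (k + 1))"
  proof
    fix k assume "k \<in> {1..<2*b+2}"
    then show "directly_right (pb b (k + 1)) (pb b k) \<or> directly_below (pb b k) (pb b (k + 1))"
    proof (cases k rule: nat_parity_cases)
      case (1 m)
      then have "k + 1 = 2 * m + 1" by simp
      then show ?thesis using 1 by (simp add: pb_even pb_odd directly_right_def)
    next
      case (2 m)
      then have "k + 1 = 2 * (m+1)" by simp
      then show ?thesis using 2 \<open>k \<in> {1..<2*b+2}\<close>
        by (auto simp: pb_def directly_below_def)
    qed
  qed
  show "Iodd b = {k \<in> {1..<2*b+2}. directly_below (pb b k) (pb b (k + 1))}"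
  proof (intro set_eqI)
    fix k
    show "k \<in> Iodd b \<longleftrightarrow> k \<in> {k \<in> {1..<2*b+2}. directly_below (pb b k) (pb b (k + 1))}"
    proof (cases k rule: nat_parity_cases)
      case (1 m)
      then have "k + 1 = 2 * m + 1" by simp
      then show ?thesis using 1 by (auto simp: pb_def directly_below_def Iodd_mem)
    next
      case (2 m)
      then have "k + 1 = 2 * (m+1)" by simp
      then show ?thesis using 2 by (auto simp: pb_def directly_below_def Iodd_mem)
    qed
  qed
qed



lemma lamI_unique:
  assumes part: "is_partition lam" and len: "2 \<le> length lam" and eq01: "lam ! 0 = lam ! 1"
    and rib: "ribbon_corresponds (rim lam) (Iodd b)"
  shows "lam = lamb b"
proof -
  obtain n p where n1: "1 \<le> n" and inj: "inj_on p {1..n}" and R: "rim lam = p ` {1..n}"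
    and steps: "\<forall>k\<in>{1..<n}. directly_right (p (k + 1)) (p k) \<or> directly_below (p k) (p (k + 1))"
    and I: "Iodd b = {k \<in> {1..<n}. directly_below (p k) (p (k + 1))}"
    using rib unfolding ribbon_corresponds_def by blast
  define L where "L = lam ! 0"
  define l where "l = length lam"
  have rimc: "\<And>i j. (i,j) \<in> rim lam \<longleftrightarrow> (i,j) \<in> diagram lam \<and> (i+1,j+1) \<notin> diagram lam"
    using rim_char[OF part] by auto
  have diag: "\<And>i j. (i,j) \<in> diagram lam \<longleftrightarrow> 1 \<le> i \<and> i \<le> l \<and> 1 \<le> j \<and> j \<le> lam ! (i - 1)"
    unfolding diagram_def l_def by auto
  have pos: "\<And>r. r < l \<Longrightarrow> 1 \<le> lam ! r" using is_partition_pos[OF part] l_def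
    by (simp add: Suc_le_eq)
  have mono: "\<And>r s. r \<le> s \<Longrightarrow> s < l \<Longrightarrow> lam ! s \<le> lam ! r"
    using is_partition_nth[OF part] l_def by auto
  have L1: "lam ! 1 = L" using eq01 L_def by simp
  have pin: "\<And>k. k \<in> {1..n} \<Longrightarrow> p k \<in> diagram lam"
    using R rim_def by auto
  have inR: "\<And>c. c \<in> rim lam \<Longrightarrow> \<exists>k\<in>{1..n}. p k = c" using R by auto
  have stepI: "\<And>k. k \<in> {1..<n} \<Longrightarrow> odd k \<Longrightarrow> k \<le> 2*b+1 \<Longrightarrow>
      fst (p k) = fst (p (k+1)) + 1 \<and> snd (p k) = snd (p (k+1))"
  proof -
    fix k assume "k \<in> {1..<n}" "odd k" "k \<le> 2*b+1"
    then have "k \<in> Iodd b" by (simp add: Iodd_mem)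
    then show "fst (p k) = fst (p (k+1)) + 1 \<and> snd (p k) = snd (p (k+1))"
      using I by (auto simp: directly_below_def)
  qed
  have stepR: "\<And>k. k \<in> {1..<n} \<Longrightarrow> \<not> (odd k \<and> k \<le> 2*b+1) \<Longrightarrow>
      fst (p (k+1)) = fst (p k) \<and> snd (p (k+1)) = snd (p k) + 1"
  proof -
    fix k assume k: "k \<in> {1..<n}" "\<not> (odd k \<and> k \<le> 2*b+1)"
    then have "k \<notin> Iodd b" by (simp add: Iodd_mem)
    then have "\<not> directly_below (p k) (p (k + 1))" using I k by auto
    then have "directly_right (p (k + 1)) (p k)" using steps k by auto
    then show "fst (p (k+1)) = fst (p k) \<and> snd (p (k+1)) = snd (p k) + 1"
      by (simp add: directly_right_def)
  qed
  have step_any: "\<And>k. k \<in> {1..<n} \<Longrightarrow> (fst (p k) = fst (p (k+1)) + 1 \<and> snd (p k) = snd (p (k+1)))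
      \<or> (fst (p (k+1)) = fst (p k) \<and> snd (p (k+1)) = snd (p k) + 1)"
    using stepI stepR by blast
  have l2: "2 \<le> l" using len l_def by simp
  have Lpos: "1 \<le> L" using pos[of 0] l2 L_def by simp
  have c1: "(1, L) \<in> rim lam"
    using rimc diag l2 Lpos L1 L_def by auto
  obtain k0 where k0: "k0 \<in> {1..n}" "p k0 = (1, L)" using inR[OF c1] by blast
  have k0n: "k0 = n"
  proof (rule ccontr)
    assume "k0 \<noteq> n"
    then have kk: "k0 \<in> {1..<n}" "k0 + 1 \<in> {1..n}" using k0 by auto
    have "p (k0+1) \<in> diagram lam" using pin kk by blast
    then show False using step_any[OF kk(1)] k0 diag L_def
      by (cases "p (k0+1)") auto
  qed
  have c2: "(2, L) \<in> rim lam"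
  proof -
    have "(2, L) \<in> diagram lam" using diag l2 Lpos L1 by auto
    moreover have "(3, L+1) \<notin> diagram lam"
    proof
      assume "(3, L+1) \<in> diagram lam"
      then have "3 \<le> l" "L + 1 \<le> lam ! 2" using diag by auto
      moreover have "lam ! 2 \<le> lam ! 1" using mono[of 1 2] \<open>3 \<le> l\<close> by simp
      ultimately show False using L1 by simp
    qed
    ultimately show ?thesis using rimc by (simp add: numeral_eq_Suc)
  qed
  obtain k1 where k1: "k1 \<in> {1..n}" "p k1 = (2, L)" using inR[OF c2] by blast
  have k1n: "k1 \<noteq> n" using k1 k0 k0n by auto
  then have kk1: "k1 \<in> {1..<n}" "k1 + 1 \<in> {1..n}" using k1 by auto
  have "p (k1 + 1) \<in> diagram lam" using pin kk1 by blast
  then have pk1: "p (k1 + 1) = (1, L)"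
    using step_any[OF kk1(1)] k1 diag L1 by (cases "p (k1+1)") auto
  have k1n': "k1 + 1 = n" using inj_onD[OF inj, of "k1+1" n] pk1 k0 k0n kk1(2) n1 by simp
  have "directly_below (p k1) (p (k1+1))" unfolding directly_below_def k1(2) pk1 by simp
  then have "k1 \<in> Iodd b" using I kk1 by blast
  then have A: "odd k1" "k1 \<le> 2*b+1" by (simp_all add: Iodd_mem)
  have "2*b+1 \<in> Iodd b" by (simp add: Iodd_mem)
  then have "2*b+1 \<in> {1..<n}" using I by blast
  then have nval: "n = 2*b+2" using A k1n' by auto
  have expl: "\<And>d. d \<le> n - 1 \<Longrightarrow> fst (p (n - d)) + (n - d) div 2 = b + 2 \<and>
                 snd (p (n - d)) + b + 1 = L + (n - d + 1) div 2"
  proof -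
    fix d show "d \<le> n - 1 \<Longrightarrow> fst (p (n - d)) + (n - d) div 2 = b + 2 \<and>
                 snd (p (n - d)) + b + 1 = L + (n - d + 1) div 2"
    proof (induction d)
      case 0
      then show ?case using k0 k0n nval by simp
    next
      case (Suc d)
      define k where "k = n - Suc d"
      have kk: "k \<in> {1..<n}" using Suc.prems k_def nval by auto
      have k1': "k + 1 = n - d" using k_def Suc.prems nval by auto
      have IH: "fst (p (k+1)) + (k+1) div 2 = b + 2 \<and> snd (p (k+1)) + b + 1 = L + (k + 2) div 2"
        using Suc.IH Suc.prems k1' by simp
      show ?case
      proof (cases "odd k \<and> k \<le> 2*b+1")
        case True
        then have "fst (p k) = fst (p (k+1)) + 1 \<and> snd (p k) = snd (p (k+1))" using stepI kk by blast
        moreover have "(k+1) div 2 = k div 2 + 1" "(k + 2) div 2 = (k+1) div 2" using True by presburger+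
        ultimately show ?thesis using IH k_def by simp
      next
        case False
        then have ev: "even k" using kk nval by auto
        have "fst (p (k+1)) = fst (p k) \<and> snd (p (k+1)) = snd (p k) + 1" using stepR kk False by blast
        moreover have "(k+1) div 2 = k div 2" "(k + 2) div 2 = (k+1) div 2 + 1" using ev by presburger+
        ultimately show ?thesis using IH k_def by simp
      qed
    qed
  qed
  have expl': "\<And>k. k \<in> {1..n} \<Longrightarrow> fst (p k) + k div 2 = b + 2 \<and> snd (p k) + b + 1 = L + (k + 1) div 2"
  proof -
    fix k assume "k \<in> {1..n}"
    then have "n - k \<le> n - 1" "n - (n - k) = k" by auto
    then show "fst (p k) + k div 2 = b + 2 \<and> snd (p k) + b + 1 = L + (k + 1) div 2"
      using expl[of "n - k"] by simp
  qed
  have p1: "fst (p 1) = b + 2" "snd (p 1) + b = L" using expl'[of 1] nval by auto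
  have "p 1 \<in> diagram lam" using pin nval by auto
  then have bl: "b + 2 \<le> l" using p1 diag by (cases "p 1") auto
  have c3: "(l, 1) \<in> rim lam"
  proof -
    have "(l, 1) \<in> diagram lam" using diag l2 pos[of "l - 1"] by auto
    moreover have "(l+1, 2) \<notin> diagram lam" using diag by auto
    ultimately show ?thesis using rimc by (simp add: numeral_eq_Suc)
  qed
  obtain k3 where k3: "k3 \<in> {1..n}" "p k3 = (l, 1)" using inR[OF c3] by blast
  have "k3 div 2 = 0" using expl'[OF k3(1)] k3(2) bl by simp
  then have "k3 = 1" using k3 by auto
  then have lv: "l = b + 2" and Lv: "L = b + 1" using k3 p1 by auto
  show ?thesis
  proof (rule nth_equalityI)
    show "length lam = length (lamb b)" using lv l_def by simp
    fix r assume r: "r < length lam"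
    show "lam ! r = lamb b ! r"
    proof (cases "r = 0")
      case True then show ?thesis using Lv L_def by simp
    next
      case False
      have rl: "r < b + 2" using r lv l_def by simp
      have cr: "(r+1, lam ! r) \<in> rim lam"
      proof -
        have "(r+1, lam ! r) \<in> diagram lam" using diag pos[of r] r l_def by auto
        moreover have "(r+2, lam ! r + 1) \<notin> diagram lam"
        proof
          assume "(r+2, lam ! r + 1) \<in> diagram lam"
          then have "r + 2 \<le> l" "lam ! r + 1 \<le> lam ! (r+1)" using diag by auto
          moreover have "lam ! (r+1) \<le> lam ! r" using mono[of r "r+1"] \<open>r + 2 \<le> l\<close> by simp
          ultimately show False by simp
        qed
        ultimately show ?thesis using rimc by (simp add: numeral_eq_Suc)
      qed
      obtain k where k: "k \<in> {1..n}" "p k = (r+1, lam ! r)" using inR[OF cr] by blast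
      have e: "r + 1 + k div 2 = b + 2" "lam ! r = (k + 1) div 2" using expl'[OF k(1)] k(2) Lv by auto
      have up: "lam ! r \<le> b + 2 - r" using e by presburger
      define k' where "k' = 2 * (b + 1 - r) + 1"
      have k'n: "k' \<in> {1..n}" using k'_def nval False rl by auto
      have "fst (p k') = r + 1" "snd (p k') = b + 2 - r"
        using expl'[OF k'n] Lv k'_def rl by auto
      moreover have "p k' \<in> diagram lam" using pin k'n by blast
      ultimately have "b + 2 - r \<le> lam ! r" using diag by (cases "p k'") auto
      then show ?thesis using up False rl by simp
    qed
  qed
qed

lemma lamI_Iodd: "lamI (Iodd b) = lamb b"
  unfolding lamI_def
proof (rule the_equality)
  show "is_partition (lamb b) \<and> 2 \<le> length (lamb b) \<and> lamb b ! 0 = lamb b ! 1 \<and> ribbon_corresponds (rim (lamb b)) (Iodd b)"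
    using is_partition_lamb ribbon_lamb by simp
  fix lam assume "is_partition lam \<and> 2 \<le> length lam \<and> lam ! 0 = lam ! 1 \<and> ribbon_corresponds (rim lam) (Iodd b)"
  then show "lam = lamb b" using lamI_unique by blast
qed

lemma sI_Iodd: "sI (Iodd b) = b"
  by (simp add: sI_def lamI_Iodd)

lemma muI_Iodd: "muI (Iodd b) = mub b"
  unfolding muI_def lamI_Iodd
proof (rule the_equality)
  have r: "rim (lamb b) = diagram (lamb b) - diagram (mub b)"
    by (auto simp: rim_lamb diagram_lamb diagram_mub inlam_def)
  have s: "diagram (mub b) \<subseteq> diagram (lamb b)"
    by (auto simp: diagram_lamb diagram_mub inlam_def)
  show "is_partition (mub b) \<and> diagram (mub b) \<subseteq> diagram (lamb b) \<and> diagram (lamb b) - diagram (mub b) = rim (lamb b)"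
    using is_partition_mub r s by simp
  fix mu assume mu: "is_partition mu \<and> diagram mu \<subseteq> diagram (lamb b) \<and> diagram (lamb b) - diagram mu = rim (lamb b)"
  then have "diagram mu = diagram (mub b)" using r s by blast
  then show "mu = mub b" using diagram_inj mu is_partition_mub by blast
qed



definition valid :: "nat \<Rightarrow> (nat \<Rightarrow> nat) \<Rightarrow> bool" where
  "valid b f \<longleftrightarrow> f 0 = b + 1 \<and> (\<forall>i. f (Suc i) \<le> f i) \<and> (\<forall>i\<ge>1. 1 \<le> f i \<and> f i + min i (b+1) \<le> b + 2)"

definition Dset :: "nat \<Rightarrow> (nat \<Rightarrow> nat) \<Rightarrow> cell set" where
  "Dset b f = {(i,j). inlam b i j \<and> (j < f i \<or> f (i - 1) < j)}"

definition fmax :: "nat \<Rightarrow> nat \<Rightarrow> nat" where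
  "fmax b i = (if i = 0 then b + 1 else if i \<le> b + 1 then b + 2 - i else 1)"

lemma valid_fmax: "valid b (fmax b)"
  unfolding valid_def fmax_def by auto

lemma Dset_fmax: "Dset b (fmax b) = diagram (mub b)"
  unfolding Dset_def fmax_def diagram_mub inlam_def by (auto split: if_splits)

lemma validD:
  assumes "valid b f"
  shows "f 0 = b + 1" "\<And>i. f (Suc i) \<le> f i" "\<And>i. i \<ge> 1 \<Longrightarrow> 1 \<le> f i"
    "\<And>i. i \<ge> 1 \<Longrightarrow> i \<le> b + 1 \<Longrightarrow> f i + i \<le> b + 2"
    "\<And>i. i \<ge> b + 1 \<Longrightarrow> f i = 1"
proof -
  show "f 0 = b + 1" "\<And>i. f (Suc i) \<le> f i" "\<And>i. i \<ge> 1 \<Longrightarrow> 1 \<le> f i"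
    using assms by (auto simp: valid_def)
  show "\<And>i. i \<ge> 1 \<Longrightarrow> i \<le> b + 1 \<Longrightarrow> f i + i \<le> b + 2"
  proof -
    fix i :: nat assume "i \<ge> 1" "i \<le> b + 1"
    then show "f i + i \<le> b + 2" using assms unfolding valid_def by (metis min.absorb1)
  qed
  show "\<And>i. i \<ge> b + 1 \<Longrightarrow> f i = 1"
  proof -
    fix i :: nat assume i: "i \<ge> b + 1"
    have A: "\<forall>k\<ge>1. 1 \<le> f k \<and> f k + min k (b+1) \<le> b + 2" using assms unfolding valid_def by blast
    have "1 \<le> i" using i by simp
    then have B: "1 \<le> f i \<and> f i + min i (b+1) \<le> b + 2" using A by blast
    moreover have "min i (b+1) = b + 1" using i by simp
    ultimately show "f i = 1" by simp
  qed
qed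

lemma valid_mono:
  assumes "valid b f" "i \<le> k" shows "f k \<le> f i"
  using assms(2)
proof (induction k)
  case 0 then show ?case by simp
next
  case (Suc k)
  then show ?case using validD(2)[OF assms(1), of k] by (cases "i = Suc k") auto
qed

lemma valid_le_fmax:
  assumes "valid b f" shows "f i \<le> fmax b i"
proof -
  consider "i = 0" | "1 \<le> i" "i \<le> b + 1" | "b + 1 < i" by linarith
  then show ?thesis
  proof cases
    case 1 then show ?thesis using validD(1)[OF assms] by (simp add: fmax_def)
  next
    case 2 then show ?thesis using validD(4)[OF assms, of i] by (simp add: fmax_def)
  next
    case 3 then show ?thesis using validD(5)[OF assms, of i] by (simp add: fmax_def)
  qed
qed

lemma step_lemma:
  assumes v: "valid b f" and D: "(i,j) \<in> Dset b f" and lam: "inlam b (i+1) (j+1)"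
    and n1: "(i, j+1) \<notin> Dset b f" and n2: "(i+1, j) \<notin> Dset b f" and n3: "(i+1, j+1) \<notin> Dset b f"
  shows "valid b (f(i := j))" "Dset b f - {(i,j)} \<union> {(i+1,j+1)} = Dset b (f(i := j))"
proof -
  have ij: "inlam b i j" "j < f i \<or> f (i - 1) < j" using D by (auto simp: Dset_def)
  have i1: "i \<ge> 1" "j \<ge> 1" using ij by (auto simp: inlam_def)
  have l2: "inlam b i (j+1)" using lam ij by (auto simp: inlam_def)
  have l3: "inlam b (i+1) j" using lam ij by (auto simp: inlam_def)
  have a1: "f i \<le> j + 1" "j + 1 \<le> f (i - 1)" using n1 l2 by (auto simp: Dset_def)
  have fi: "f i = j + 1" using a1 ij by auto
  have a3: "f (i+1) \<le> j" using n2 l3 fi by (auto simp: Dset_def)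
  have vf: "f 0 = b + 1" "\<And>k. f (Suc k) \<le> f k" "\<forall>k\<ge>1. 1 \<le> f k \<and> f k + min k (b+1) \<le> b + 2"
    using v by (auto simp: valid_def)
  show "valid b (f(i := j))"
    unfolding valid_def
  proof (intro conjI allI impI)
    show "(f(i := j)) 0 = b + 1" using i1 vf by simp
    fix k
    show "(f(i := j)) (Suc k) \<le> (f(i := j)) k"
      using vf(2)[of k] a3 fi a1 i1 by (cases "Suc k = i"; cases "k = i") auto
    assume "1 \<le> k"
    then show "1 \<le> (f(i := j)) k" "(f(i := j)) k + min k (b + 1) \<le> b + 2"
      using vf(3) i1 fi by (cases "k = i"; force)+
  qed
  show "Dset b f - {(i,j)} \<union> {(i+1,j+1)} = Dset b (f(i := j))"
  proof (intro set_eqI iffI)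
    fix c assume "c \<in> Dset b f - {(i,j)} \<union> {(i+1,j+1)}"
    then show "c \<in> Dset b (f(i := j))"
      using lam fi a1 a3 i1 by (cases c) (auto simp: Dset_def)
  next
    fix c assume "c \<in> Dset b (f(i := j))"
    then show "c \<in> Dset b f - {(i,j)} \<union> {(i+1,j+1)}"
      using lam fi a1 a3 i1 by (cases c) (auto simp: Dset_def split: if_splits)
  qed
qed

lemma excited_Dset:
  assumes "D \<in> excited (lamb b) (mub b)"
  shows "\<exists>f. valid b f \<and> D = Dset b f"
  using assms
proof (induction rule: excited.induct)
  case base
  then show ?case using valid_fmax Dset_fmax by metis
next
  case (step D i j)
  then obtain f where f: "valid b f" "D = Dset b f" by blast
  have lam: "inlam b (i+1) (j+1)" using step.hyps(3) by (simp add: diagram_lamb)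
  show ?case using step_lemma[OF f(1) _ lam] step.hyps f(2) by blast
qed

definition Mf :: "nat \<Rightarrow> (nat \<Rightarrow> nat) \<Rightarrow> nat" where
  "Mf b f = (\<Sum>i<b+2. fmax b i - f i)"

lemma Dset_excited:
  assumes "valid b f"
  shows "Dset b f \<in> excited (lamb b) (mub b)"
  using assms
proof (induction "Mf b f" arbitrary: f rule: less_induct)
  case less
  note v = less.prems
  show ?case
  proof (cases "\<forall>i. f i = fmax b i")
    case True
    then have "f = fmax b" by auto
    then show ?thesis using Dset_fmax excited.base by metis
  next
    case False
    then have "\<exists>i. f i \<noteq> fmax b i" by auto
    then obtain i where i: "f i \<noteq> fmax b i" and imin: "\<And>k. k < i \<Longrightarrow> f k = fmax b k"
      using exists_least_iff[of "\<lambda>i. f i \<noteq> fmax b i"] by blast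
    have fle: "\<And>k. f k \<le> fmax b k" using valid_le_fmax[OF v] .
    have ilt: "f i < fmax b i" using fle[of i] i by simp
    have i0: "i \<noteq> 0" using validD(1)[OF v] i unfolding fmax_def by (cases "i = 0") auto
    have "i \<le> b"
    proof (rule ccontr)
      assume "\<not> i \<le> b"
      then have "f i = 1" "fmax b i = 1" using validD(5)[OF v, of i] unfolding fmax_def by auto
      then show False using ilt by simp
    qed
    then have i1: "i \<ge> 1" "i \<le> b" using i0 by auto
    define g where "g = f(i := f i + 1)"
    have fprev: "f (i - 1) = fmax b (i - 1)" using imin i1 by simp
    have fm: "fmax b (i - 1) \<ge> fmax b i + 1 \<or> i = 1" using i1 unfolding fmax_def by auto
    have vg: "valid b g"
      unfolding valid_def g_def
    proof (intro conjI allI impI)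
      show "(f(i := f i + 1)) 0 = b + 1" using i1 validD(1)[OF v] by simp
      fix k
      show "(f(i := f i + 1)) (Suc k) \<le> (f(i := f i + 1)) k"
      proof (cases "Suc k = i")
        case True
        then have "f (i - 1) \<ge> f i + 1" using fprev fm ilt validD(1)[OF v] unfolding fmax_def
          by (auto split: if_splits)
        then show ?thesis using True i1 by auto
      next
        case False
        then show ?thesis using validD(2)[OF v, of k] by auto
      qed
      assume "1 \<le> k"
      then show "1 \<le> (f(i := f i + 1)) k" "(f(i := f i + 1)) k + min k (b + 1) \<le> b + 2"
        using v ilt i1 unfolding valid_def fmax_def by (auto split: if_splits)
    qed
    have "Mf b g < Mf b f"
      unfolding Mf_def
    proof (rule sum_strict_mono_ex1)
      show "finite {..<b+2}" by simp
      show "\<forall>x\<in>{..<b + 2}. fmax b x - g x \<le> fmax b x - f x" unfolding g_def by auto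
      show "\<exists>a\<in>{..<b + 2}. fmax b a - g a < fmax b a - f a"
        using ilt i1 unfolding g_def by (intro bexI[of _ i]) auto
    qed
    then have IH: "Dset b g \<in> excited (lamb b) (mub b)" using less.hyps vg by blast
    have gi: "g i = f i + 1" and gother: "\<And>k. k \<noteq> i \<Longrightarrow> g k = f k" unfolding g_def by auto
    have fi1: "1 \<le> f i" using validD(3)[OF v i1(1)] .
    have fib: "f i + i \<le> b + 1" using ilt i1 unfolding fmax_def by auto
    have gprev: "g (i - 1) \<ge> f i + 1" using fprev fm ilt validD(1)[OF v] gother[of "i - 1"] i1
      unfolding fmax_def by (auto split: if_splits)
    have gnext: "g (i + 1) \<le> f i" using gother[of "i+1"] validD(2)[OF v, of i] by simp
    have c0: "(i, f i) \<in> Dset b g" using gi fi1 fib i1 by (auto simp: Dset_def inlam_def)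
    have c1: "inlam b (i+1) (f i + 1)" using fib i1 by (auto simp: inlam_def)
    have c2: "(i, f i + 1) \<notin> Dset b g" using gi gprev by (auto simp: Dset_def)
    have c3: "(i + 1, f i) \<notin> Dset b g" using gi gnext by (auto simp: Dset_def)
    have c4: "(i + 1, f i + 1) \<notin> Dset b g" using gi gnext by (auto simp: Dset_def)
    have "g(i := f i) = f" unfolding g_def by auto
    then have eq: "Dset b g - {(i, f i)} \<union> {(i+1, f i+1)} = Dset b f"
      using step_lemma(2)[OF vg c0 c1 c2 c3 c4] by simp
    have "Dset b g - {(i, f i)} \<union> {(i+1, f i+1)} \<in> excited (lamb b) (mub b)"
      by (rule excited.step[OF IH c0]) (use c1 c2 c3 c4 in \<open>auto simp: diagram_lamb\<close>)
    then show ?thesis using eq by simp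
  qed
qed

lemma excited_eq: "excited (lamb b) (mub b) = Dset b ` {f. valid b f}"
  using excited_Dset Dset_excited by blast

lemma Dset_inj: "inj_on (Dset b) {f. valid b f}"
proof (rule inj_onI)
  fix f g assume f: "f \<in> {f. valid b f}" and g: "g \<in> {f. valid b f}" and eq: "Dset b f = Dset b g"
  have vf: "valid b f" and vg: "valid b g" using f g by auto
  have *: "f i \<le> g i" if vf: "valid b f" and vg: "valid b g" and eq: "Dset b f = Dset b g" for f g i
  proof (rule ccontr)
    assume lt: "\<not> f i \<le> g i"
    then have i1: "i \<ge> 1" "i \<le> b" using validD[OF vf] validD[OF vg] by (cases "i = 0"; cases "i \<ge> b+1"; auto)+
    have "inlam b i (g i)" using validD(3,4)[OF vg] validD(3)[OF vf] i1 lt validD(4)[OF vf, of i]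
      unfolding inlam_def by auto
    then have "(i, g i) \<in> Dset b f" using lt by (auto simp: Dset_def)
    moreover have "(i, g i) \<notin> Dset b g" using valid_mono[OF vg, of "i - 1" i] by (auto simp: Dset_def)
    ultimately show False using eq by simp
  qed
  show "f = g"
  proof
    fix i show "f i = g i" using *[OF vf vg eq, of i] *[OF vg vf eq[symmetric], of i] by simp
  qed
qed

lemma finite_diagram_lamb: "finite (diagram (lamb b))"
proof -
  have "diagram (lamb b) \<subseteq> {1..b+2} \<times> {1..b+1}" by (auto simp: diagram_lamb inlam_def)
  then show ?thesis by (rule finite_subset) simp
qed

lemma Dset_sub: "Dset b f \<subseteq> diagram (lamb b)"
  by (auto simp: Dset_def diagram_lamb)

lemma finite_valid: "finite {f. valid b f}"
proof -
  have "Dset b ` {f. valid b f} \<subseteq> Pow (diagram (lamb b))" using Dset_sub by auto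
  then have "finite (Dset b ` {f. valid b f})" using finite_diagram_lamb by (meson finite_Pow_iff finite_subset)
  then show ?thesis using Dset_inj finite_imageD by blast
qed



definition hk :: "nat \<Rightarrow> cell \<Rightarrow> nat" where
  "hk b c = 2 * (b + 3 - fst c - snd c) + 1"

definition W :: "nat \<Rightarrow> (nat \<Rightarrow> nat) \<Rightarrow> nat" where
  "W b f = (\<Prod>c \<in> {c \<in> Dset b f. fst c \<noteq> 1}. hk b c)"

definition S :: "nat \<Rightarrow> nat \<Rightarrow> (nat \<Rightarrow> nat) set" where
  "S b j = {f. valid b f \<and> f 1 = b + 1 - j}"

lemma hook_lamb:
  assumes "inlam b i j" "i \<ge> 2"
  shows "hook (lamb b) (i,j) = hk b (i,j)"
proof -
  have set: "{d \<in> diagram (lamb b). (fst d = i \<and> snd d \<ge> j) \<or> (snd d = j \<and> fst d \<ge> i)}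
      = ({i} \<times> {j..b+3-i}) \<union> ({i..b+3-j} \<times> {j})"
    using assms by (auto simp: diagram_lamb inlam_def)
  have int: "({i} \<times> {j..b+3-i}) \<inter> ({i..b+3-j} \<times> {j}) = {(i,j)}"
    using assms by (auto simp: inlam_def)
  have "card ({i} \<times> {j..b+3-i}) + card ({i..b+3-j} \<times> {j})
      = card (({i} \<times> {j..b+3-i}) \<union> ({i..b+3-j} \<times> {j})) + card (({i} \<times> {j..b+3-i}) \<inter> ({i..b+3-j} \<times> {j}))"
    by (rule card_Un_Int) auto
  then have "card (({i} \<times> {j..b+3-i}) \<union> ({i..b+3-j} \<times> {j})) = (b+3-i+1-j) + (b+3-j+1-i) - 1"
    using int by (simp add: card_cartesian_product)
  moreover have "hook (lamb b) (i,j) = card {d \<in> diagram (lamb b). (fst d = i \<and> snd d \<ge> j) \<or> (snd d = j \<and> fst d \<ge> i)}"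
    by (simp add: hook_def)
  ultimately show ?thesis using assms unfolding set hk_def by (auto simp: inlam_def)
qed

lemma row1_card:
  assumes "valid b f"
  shows "card {c \<in> Dset b f. fst c = 1} = f 1 - 1"
proof -
  have f1: "f 1 + 1 \<le> b + 2" using validD(4)[OF assms, of 1] by simp
  have "{c \<in> Dset b f. fst c = 1} = {1} \<times> {1..<f 1}"
    using f1 validD(1)[OF assms] by (auto simp: Dset_def inlam_def)
  then show ?thesis by (simp add: card_cartesian_product)
qed

lemma finite_Dset: "finite (Dset b f)"
  using Dset_sub finite_diagram_lamb finite_subset by blast

lemma NN_eq:
  assumes "j \<le> b"
  shows "NNcoeff j (Iodd b) = (\<Sum>f \<in> S b j. W b f)"
proof -
  have set: "{D \<in> excited (lamb b) (mub b). card {c \<in> D. fst c = 1} = b - j} = Dset b ` S b j"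
  proof -
    have "\<And>f. valid b f \<Longrightarrow> (card {c \<in> Dset b f. fst c = 1} = b - j) \<longleftrightarrow> f 1 = b + 1 - j"
    proof -
      fix f assume v: "valid b f"
      have "1 \<le> f 1" "f 1 + 1 \<le> b + 2" using validD(3,4)[OF v, of 1] by auto
      then show "(card {c \<in> Dset b f. fst c = 1} = b - j) \<longleftrightarrow> f 1 = b + 1 - j"
        using row1_card[OF v] assms by auto
    qed
    then show ?thesis unfolding excited_eq S_def by auto
  qed
  have inj: "inj_on (Dset b) (S b j)" using Dset_inj by (rule inj_on_subset) (auto simp: S_def)
  have "NNcoeff j (Iodd b) = (\<Sum>D \<in> Dset b ` S b j. \<Prod>c \<in> {c \<in> D. fst c \<noteq> 1}. hook (lamb b) c)"
    unfolding NNcoeff_def lamI_Iodd muI_Iodd sI_Iodd set by simp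
  also have "\<dots> = (\<Sum>f \<in> S b j. \<Prod>c \<in> {c \<in> Dset b f. fst c \<noteq> 1}. hook (lamb b) c)"
    by (simp add: sum.reindex[OF inj])
  also have "\<dots> = (\<Sum>f \<in> S b j. W b f)"
    unfolding W_def
  proof (rule sum.cong[OF refl], rule prod.cong[OF refl])
    fix f c assume "c \<in> {c \<in> Dset b f. fst c \<noteq> 1}"
    then obtain i k where c: "c = (i,k)" "inlam b i k" "i \<noteq> 1" by (auto simp: Dset_def)
    then have "i \<ge> 2" by (auto simp: inlam_def)
    then show "hook (lamb b) c = hk b c" using hook_lamb c by simp
  qed
  finally show ?thesis .
qed



definition sh :: "nat \<Rightarrow> (nat \<Rightarrow> nat) \<Rightarrow> nat \<Rightarrow> nat" where
  "sh c f = (\<lambda>i. if i = 0 then c + 1 else f (Suc i))"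
definition ext :: "nat \<Rightarrow> nat \<Rightarrow> (nat \<Rightarrow> nat) \<Rightarrow> nat \<Rightarrow> nat" where
  "ext c a g = (\<lambda>i. if i = 0 then c + 2 else if i = 1 then c + 2 - a else g (i - 1))"
definition R :: "nat \<Rightarrow> nat \<Rightarrow> nat \<Rightarrow> nat" where
  "R c a m = (\<Prod>t \<in> {..<a} \<union> {m+2..c+1}. 2 * t + 1)"

lemma valid_sh:
  assumes v: "valid (Suc c) f" shows "valid c (sh c f)"
  unfolding valid_def
proof (intro conjI allI impI)
  show "sh c f 0 = c + 1" by (simp add: sh_def)
  fix i
  show "sh c f (Suc i) \<le> sh c f i"
  proof (cases i)
    case 0
    then show ?thesis using validD(4)[OF v, of 2] by (simp add: sh_def numeral_2_eq_2)
  next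
    case (Suc k)
    then show ?thesis using validD(2)[OF v, of "Suc i"] by (simp add: sh_def)
  qed
  assume i: "1 \<le> i"
  show "1 \<le> sh c f i" using validD(3)[OF v, of "Suc i"] i by (simp add: sh_def)
  have "\<forall>k\<ge>1. 1 \<le> f k \<and> f k + min k (Suc c + 1) \<le> Suc c + 2" using v by (simp add: valid_def)
  then have "f (Suc i) + min (Suc i) (Suc c + 1) \<le> Suc c + 2" by auto
  then show "sh c f i + min i (c + 1) \<le> c + 2" using i by (simp add: sh_def)
qed

lemma valid_ext:
  assumes v: "valid c g" and a: "a \<le> c + 1" and g1: "g 1 \<le> c + 2 - a"
  shows "valid (Suc c) (ext c a g)"
  unfolding valid_def
proof (intro conjI allI impI)
  show "ext c a g 0 = Suc c + 1" by (simp add: ext_def)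
  fix i
  show "ext c a g (Suc i) \<le> ext c a g i"
  proof (cases i)
    case 0
    then show ?thesis by (simp add: ext_def)
  next
    case (Suc k)
    then show ?thesis using validD(2)[OF v, of k] g1 by (cases k) (auto simp: ext_def)
  qed
  assume i: "1 \<le> i"
  show "1 \<le> ext c a g i" using validD(3)[OF v, of "i - 1"] i a by (auto simp: ext_def)
  have "\<forall>k\<ge>1. 1 \<le> g k \<and> g k + min k (c + 1) \<le> c + 2" using v by (simp add: valid_def)
  then have "i \<ge> 2 \<Longrightarrow> g (i - 1) + min (i - 1) (c + 1) \<le> c + 2" by auto
  moreover have "i \<ge> 2 \<Longrightarrow> min i (Suc c + 1) = min (i - 1) (c + 1) + 1" by auto
  ultimately show "ext c a g i + min i (Suc c + 1) \<le> Suc c + 2" using i a by (auto simp: ext_def)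
qed

lemma W_split:
  assumes v: "valid (Suc c) f"
  shows "W (Suc c) f = (\<Prod>x \<in> {x \<in> Dset (Suc c) f. fst x = 2}. hk (Suc c) x) * W c (sh c f)"
proof -
  define A where "A = {x \<in> Dset (Suc c) f. fst x = 2}"
  define B where "B = {x \<in> Dset c (sh c f). fst x \<noteq> 1}"
  define sft where "sft = (\<lambda>x::cell. (fst x + 1, snd x))"
  have split: "{x \<in> Dset (Suc c) f. fst x \<noteq> 1} = A \<union> sft ` B"
  proof (intro set_eqI iffI)
    fix x assume x: "x \<in> {x \<in> Dset (Suc c) f. fst x \<noteq> 1}"
    obtain i j where ij: "x = (i,j)" by fastforce
    show "x \<in> A \<union> sft ` B"
    proof (cases "i = 2")
      case True then show ?thesis using x ij by (simp add: A_def)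
    next
      case False
      then have i3: "i \<ge> 3" using x ij by (auto simp: Dset_def inlam_def)
      have "(i - 1, j) \<in> B" using x ij i3
        by (auto simp: B_def Dset_def inlam_def sh_def Suc_diff_Suc numeral_eq_Suc)
      moreover have "x = sft (i - 1, j)" using ij i3 by (simp add: sft_def)
      ultimately show ?thesis by blast
    qed
  next
    fix x assume x: "x \<in> A \<union> sft ` B"
    then show "x \<in> {x \<in> Dset (Suc c) f. fst x \<noteq> 1}"
    proof
      assume "x \<in> A" then show ?thesis by (simp add: A_def)
    next
      assume "x \<in> sft ` B"
      then obtain i j where ij: "x = (i + 1, j)" "(i,j) \<in> B" by (auto simp: sft_def)
      then have i2: "i \<ge> 2" by (auto simp: B_def Dset_def inlam_def)
      then show ?thesis using ij
        by (auto simp: B_def Dset_def inlam_def sh_def split: if_splits)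
    qed
  qed
  have disj: "A \<inter> sft ` B = {}"
    by (auto simp: A_def B_def sft_def Dset_def inlam_def)
  have finA: "finite A" using finite_Dset by (simp add: A_def)
  have finB: "finite B" using finite_Dset by (simp add: B_def)
  have injs: "inj_on sft B" by (auto simp: inj_on_def sft_def)
  have "W (Suc c) f = prod (hk (Suc c)) A * prod (hk (Suc c)) (sft ` B)"
    unfolding W_def split by (rule prod.union_disjoint[OF finA _ disj]) (use finB in simp)
  also have "prod (hk (Suc c)) (sft ` B) = prod (hk (Suc c) \<circ> sft) B"
    by (rule prod.reindex[OF injs])
  also have "\<dots> = W c (sh c f)"
    unfolding W_def B_def[symmetric]
    by (rule prod.cong[OF refl]) (auto simp: hk_def sft_def)
  finally show ?thesis by (simp add: A_def)
qed

lemma row2_eval: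
  assumes v: "valid (Suc c) f" and f1: "f 1 = c + 2 - a" and a: "a \<le> c + 1"
  shows "(\<Prod>x \<in> {x \<in> Dset (Suc c) f. fst x = 2}. hk (Suc c) x) = R c a (c + 1 - f 2)"
proof -
  define m where "m = c + 1 - f 2"
  have f2: "1 \<le> f 2" "f 2 + 2 \<le> c + 3" using validD(3,4)[OF v, of 2] by auto
  define T where "T = {..<a} \<union> {m+2..c+1}"
  define e where "e = (\<lambda>t::nat. (2::nat, c + 2 - t))"
  have set: "{x \<in> Dset (Suc c) f. fst x = 2} = e ` T"
  proof (intro set_eqI iffI)
    fix x assume x: "x \<in> {x \<in> Dset (Suc c) f. fst x = 2}"
    then obtain j where j: "x = (2, j)" "1 \<le> j" "j \<le> c + 2" "j < f 2 \<or> f 1 < j"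
      by (auto simp: Dset_def inlam_def)
    have "c + 2 - j \<in> T" using j f1 f2 a by (auto simp: T_def m_def)
    moreover have "x = e (c + 2 - j)" using j by (simp add: e_def)
    ultimately show "x \<in> e ` T" by blast
  next
    fix x assume "x \<in> e ` T"
    then obtain t where t: "t \<in> T" "x = e t" by blast
    then have "t \<le> c + 1" using a by (auto simp: T_def)
    then show "x \<in> {x \<in> Dset (Suc c) f. fst x = 2}" using t f1 f2 a
      by (auto simp: e_def T_def m_def Dset_def inlam_def)
  qed
  have inj: "inj_on e T"
  proof (rule inj_onI)
    fix s t assume "s \<in> T" "t \<in> T" "e s = e t"
    moreover have "s \<le> c + 1" "t \<le> c + 1" using \<open>s \<in> T\<close> \<open>t \<in> T\<close> a by (auto simp: T_def)
    ultimately show "s = t" by (simp add: e_def)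
  qed
  have "(\<Prod>x \<in> {x \<in> Dset (Suc c) f. fst x = 2}. hk (Suc c) x) = prod (hk (Suc c) \<circ> e) T"
    unfolding set by (rule prod.reindex[OF inj])
  also have "\<dots> = (\<Prod>t \<in> T. 2 * t + 1)"
  proof (rule prod.cong[OF refl])
    fix t assume "t \<in> T"
    then have "t \<le> c + 1" using a by (auto simp: T_def)
    then show "(hk (Suc c) \<circ> e) t = 2 * t + 1" by (simp add: hk_def e_def)
  qed
  finally show ?thesis by (simp add: R_def T_def m_def)
qed

lemma main_rec:
  assumes a: "a \<le> c + 1"
  shows "(\<Sum>f \<in> S (Suc c) a. W (Suc c) f) = (\<Sum>m \<in> {a - 1..c}. R c a m * (\<Sum>g \<in> S c m. W c g))"
proof -
  define T where "T = {g. valid c g \<and> g 1 \<le> c + 2 - a}"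
  have step1: "(\<Sum>f \<in> S (Suc c) a. W (Suc c) f) = (\<Sum>g \<in> T. R c a (c + 1 - g 1) * W c g)"
  proof (rule sum.reindex_bij_witness[where i = "ext c a" and j = "sh c"])
    fix f assume f: "f \<in> S (Suc c) a"
    then have v: "valid (Suc c) f" and f1: "f 1 = c + 2 - a" by (auto simp: S_def)
    show "ext c a (sh c f) = f"
    proof
      fix i show "ext c a (sh c f) i = f i"
        using validD(1)[OF v] f1 by (auto simp: ext_def sh_def)
    qed
    show "sh c f \<in> T" using valid_sh[OF v] validD(2)[OF v, of 1] f1
      by (simp add: T_def sh_def numeral_2_eq_2)
    show "R c a (c + 1 - sh c f 1) * W c (sh c f) = W (Suc c) f"
      using W_split[OF v] row2_eval[OF v f1 a] by (simp add: sh_def numeral_2_eq_2)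
  next
    fix g assume g: "g \<in> T"
    then have v: "valid c g" and g1: "g 1 \<le> c + 2 - a" by (auto simp: T_def)
    show "sh c (ext c a g) = g"
    proof
      fix i show "sh c (ext c a g) i = g i"
        using validD(1)[OF v] by (auto simp: ext_def sh_def)
    qed
    show "ext c a g \<in> S (Suc c) a" using valid_ext[OF v a g1] by (simp add: S_def ext_def)
  qed
  have finT: "finite T" using finite_valid[of c] by (rule finite_subset[rotated]) (auto simp: T_def)
  have img: "(\<lambda>g. c + 1 - g 1) ` T \<subseteq> {a - 1..c}"
  proof
    fix x assume "x \<in> (\<lambda>g. c + 1 - g 1) ` T"
    then obtain g where g: "g \<in> T" "x = c + 1 - g 1" by blast
    then have "1 \<le> g 1" "g 1 \<le> c + 2 - a" using validD(3)[of c g 1] by (auto simp: T_def)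
    then show "x \<in> {a - 1..c}" using g a by auto
  qed
  have "(\<Sum>g \<in> T. R c a (c + 1 - g 1) * W c g)
      = (\<Sum>m \<in> {a - 1..c}. \<Sum>g \<in> {g \<in> T. c + 1 - g 1 = m}. R c a (c + 1 - g 1) * W c g)"
    by (rule sum.group[symmetric, OF finT _ img]) simp
  also have "\<dots> = (\<Sum>m \<in> {a - 1..c}. R c a m * (\<Sum>g \<in> S c m. W c g))"
  proof (rule sum.cong[OF refl])
    fix m assume m: "m \<in> {a - 1..c}"
    have "{g \<in> T. c + 1 - g 1 = m} = S c m"
    proof (intro set_eqI iffI)
      fix g assume "g \<in> {g \<in> T. c + 1 - g 1 = m}"
      then have v: "valid c g" "c + 1 - g 1 = m" by (auto simp: T_def)
      have "1 \<le> g 1" "g 1 + 1 \<le> c + 2" using validD(3,4)[OF v(1), of 1] by auto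
      then show "g \<in> S c m" using v m by (auto simp: S_def)
    next
      fix g assume "g \<in> S c m"
      then have v: "valid c g" "g 1 = c + 1 - m" by (auto simp: S_def)
      then show "g \<in> {g \<in> T. c + 1 - g 1 = m}" using m a by (auto simp: T_def)
    qed
    moreover have "(\<Sum>g \<in> {g \<in> T. c + 1 - g 1 = m}. R c a (c + 1 - g 1) * W c g)
        = (\<Sum>g \<in> {g \<in> T. c + 1 - g 1 = m}. R c a m * W c g)"
      by (rule sum.cong) auto
    ultimately show "(\<Sum>g \<in> {g \<in> T. c + 1 - g 1 = m}. R c a (c + 1 - g 1) * W c g) = R c a m * (\<Sum>g \<in> S c m. W c g)"
      by (simp add: sum_distrib_left)
  qed
  finally show ?thesis using step1 by simp
qed



lemma dfact_odd: "dfact (2 * n - 1) = (\<Prod>t<n. 2 * t + 1)"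
proof -
  have "dfact (2 * n - 1) = (\<Prod>i<n. 2 * n - 1 - 2 * i)"
  proof (cases n)
    case 0 then show ?thesis by (simp add: dfact_def)
  next
    case (Suc k)
    then have "(2 * n - 1 + 1) div 2 = n" by simp
    then show ?thesis by (simp add: dfact_def)
  qed
  also have "\<dots> = (\<Prod>t<n. 2 * t + 1)"
    by (rule prod.reindex_bij_witness[where i = "\<lambda>t. n - 1 - t" and j = "\<lambda>t. n - 1 - t"]) auto
  finally show ?thesis .
qed

lemma dfact_odd': "dfact (2 * n + 1) = (\<Prod>t<n+1. 2 * t + 1)"
proof -
  have "2 * (n + 1) - 1 = 2 * n + 1" by simp
  then show ?thesis using dfact_odd[of "n+1"] by metis
qed

lemma dfact_pos: "0 < dfact n"
  unfolding dfact_def by (rule prod_pos) auto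

lemma R_eq:
  assumes "a \<le> m + 1" "m \<le> c"
  shows "R c a m * dfact (2 * m + 3) = dfact (2 * a - 1) * dfact (2 * (c + 1) + 1)"
proof -
  define Pa where "Pa = (\<Prod>t<a. 2 * t + (1::nat))"
  define Pmc where "Pmc = (\<Prod>t \<in> {m+2..c+1}. 2 * t + (1::nat))"
  define Pm where "Pm = (\<Prod>t<m+2. 2 * t + (1::nat))"
  define Pc where "Pc = (\<Prod>t<c+2. 2 * t + (1::nat))"
  have d1: "{..<a} \<inter> {m+2..c+1} = {}" using assms by auto
  have e1: "R c a m = Pa * Pmc"
    unfolding R_def Pa_def Pmc_def by (rule prod.union_disjoint) (use d1 in auto)
  have e2: "dfact (2 * m + 3) = Pm"
  proof -
    have "2 * m + 3 = 2 * (m + 1) + 1" "m + 1 + 1 = m + 2" by simp_all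
    then show ?thesis using dfact_odd'[of "m+1"] unfolding Pm_def by metis
  qed
  have e3: "Pm * Pmc = Pc"
  proof -
    have u: "{..<m+2} \<union> {m+2..c+1} = {..<c+2}" using assms by auto
    have "(\<Prod>t \<in> {..<m+2} \<union> {m+2..c+1}. 2 * t + (1::nat)) = Pm * Pmc"
      unfolding Pm_def Pmc_def by (rule prod.union_disjoint) auto
    then show ?thesis unfolding u Pc_def by (simp only:)
  qed
  have e4: "dfact (2 * (c + 1) + 1) = Pc"
  proof -
    have "c + 1 + 1 = c + 2" by simp
    then show ?thesis using dfact_odd'[of "c+1"] unfolding Pc_def by metis
  qed
  have e5: "dfact (2 * a - 1) = Pa" using dfact_odd[of a] unfolding Pa_def .
  have "R c a m * dfact (2 * m + 3) = Pa * (Pm * Pmc)" unfolding e1 e2 by (simp only: mult_ac)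
  also have "\<dots> = dfact (2 * a - 1) * dfact (2 * (c + 1) + 1)" unfolding e3 e4 e5 ..
  finally show ?thesis .
qed

lemma R_real:
  assumes "a \<le> m + 1" "m \<le> c"
  shows "real (R c a m) = real (dfact (2 * a - 1)) * (real (dfact (2 * (c + 1) + 1)) / real (dfact (2 * m + 3)))"
proof -
  have "real (R c a m) * real (dfact (2 * m + 3)) = real (dfact (2 * a - 1)) * real (dfact (2 * (c + 1) + 1))"
    using R_eq[OF assms] by (metis of_nat_mult)
  moreover have "real (dfact (2 * m + 3)) > 0" using dfact_pos by simp
  ultimately show ?thesis by (simp add: field_simps)
qed

lemma rec_nat:
  assumes "a \<le> c + 1"
  shows "NNcoeff a (Iodd (Suc c)) = (\<Sum>m \<in> {a - 1..c}. R c a m * NNcoeff m (Iodd c))"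
proof -
  have "NNcoeff a (Iodd (Suc c)) = (\<Sum>f \<in> S (Suc c) a. W (Suc c) f)" using NN_eq assms by simp
  also have "\<dots> = (\<Sum>m \<in> {a - 1..c}. R c a m * (\<Sum>g \<in> S c m. W c g))" by (rule main_rec[OF assms])
  also have "\<dots> = (\<Sum>m \<in> {a - 1..c}. R c a m * NNcoeff m (Iodd c))"
    by (rule sum.cong[OF refl]) (simp add: NN_eq)
  finally show ?thesis .
qed

lemma part1: "NNcoeff 0 {1} = 1"
proof -
  have S00: "S 0 0 = {\<lambda>_::nat. 1::nat}"
  proof (intro set_eqI iffI)
    fix f assume "f \<in> S 0 0"
    then have v: "valid 0 f" by (simp add: S_def)
    show "f \<in> {\<lambda>_. 1}"
    proof -
      have "\<And>i. f i = 1"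
      proof -
        fix i show "f i = 1" using validD(1)[OF v] validD(5)[OF v, of i] by (cases "i = 0") auto
      qed
      then show ?thesis by auto
    qed
  next
    fix f :: "nat \<Rightarrow> nat" assume "f \<in> {\<lambda>_. 1::nat}"
    then show "f \<in> S 0 0" by (auto simp: S_def valid_def)
  qed
  have "Dset 0 (\<lambda>_. 1) = {}" by (auto simp: Dset_def inlam_def)
  then have "W 0 (\<lambda>_. 1) = 1" by (simp add: W_def)
  then show ?thesis using NN_eq[of 0 0] S00 Iodd0 by simp
qed

lemma part2:
  assumes "1 \<le> a" "a \<le> b"
  shows "real (NNcoeff a (Iodd b)) =
           real (dfact (2 * a - 1)) *
           (\<Sum>i = a - 1..b - 1. real (NNcoeff i (Iodd (b - 1))) *
               (real (dfact (2 * b + 1)) / real (dfact (2 * i + 3))))"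
proof -
  obtain c where b: "b = Suc c" using assms by (cases b) auto
  have "real (NNcoeff a (Iodd b)) = (\<Sum>m \<in> {a - 1..c}. real (R c a m) * real (NNcoeff m (Iodd c)))"
    using rec_nat[of a c] assms b by simp
  also have "\<dots> = (\<Sum>m \<in> {a - 1..c}. real (dfact (2 * a - 1)) * (real (NNcoeff m (Iodd c)) *
               (real (dfact (2 * b + 1)) / real (dfact (2 * m + 3)))))"
  proof (rule sum.cong[OF refl])
    fix m assume "m \<in> {a - 1..c}"
    then have "a \<le> m + 1" "m \<le> c" by auto
    then show "real (R c a m) * real (NNcoeff m (Iodd c)) = real (dfact (2 * a - 1)) * (real (NNcoeff m (Iodd c)) *
               (real (dfact (2 * b + 1)) / real (dfact (2 * m + 3))))"
      using R_real b by simp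
  qed
  also have "\<dots> = real (dfact (2 * a - 1)) *
           (\<Sum>i = a - 1..b - 1. real (NNcoeff i (Iodd (b - 1))) *
               (real (dfact (2 * b + 1)) / real (dfact (2 * i + 3))))"
    by (simp add: sum_distrib_left b)
  finally show ?thesis .
qed

lemma part3:
  assumes "1 \<le> b"
  shows "NNcoeff 0 (Iodd b) = NNcoeff 1 (Iodd b)"
proof -
  obtain c where b: "b = Suc c" using assms by (cases b) auto
  have "\<And>m. R c 0 m = R c 1 m"
  proof -
    fix m
    have "{..<1::nat} \<union> {m+2..c+1} = insert 0 {m+2..c+1}" by auto
    then have "R c 1 m = (2 * 0 + 1) * (\<Prod>t \<in> {m+2..c+1}. 2 * t + 1)"
      unfolding R_def by (simp add: prod.insert)
    then show "R c 0 m = R c 1 m" by (simp add: R_def)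
  qed
  then show ?thesis using rec_nat[of 0 c] rec_nat[of 1 c] b by simp
qed

theorem proposition7p2:
  shows "NNcoeff 0 {1} = 1
    \<and> (\<forall>a b. 1 \<le> a \<and> a \<le> b \<longrightarrow>
         real (NNcoeff a (Iodd b)) =
           real (dfact (2 * a - 1)) *
           (\<Sum>i = a - 1..b - 1. real (NNcoeff i (Iodd (b - 1))) *
               (real (dfact (2 * b + 1)) / real (dfact (2 * i + 3)))))
    \<and> (\<forall>b \<ge> 1. NNcoeff 0 (Iodd b) = NNcoeff 1 (Iodd b))"
  using part1 part2 part3 by blast

end
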